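(* Let $u\geq 1$, $a=(-u,-1)$, $b=(u,1)$. Consider the following eight open rectangles ("grey cells"): $H_1=(-\infty,-u)\times(0,1)$, $H_2=(-u,0)\times(1,\infty)$, $H_3=(0,u)\times(-\infty,-1)$, $H_4=(u,\infty)\times(-1,0)$, $S_1=(-\infty,-u)\times(1,\infty)$, $S_2=(-u,0)\times(0,1)$, $S_3=(0,u)\times(-1,0)$, $S_4=(u,\infty)\times(-\infty,-1)$. If $C=I\times J$ is one of these cells and $x\in I$, then for each $p\neq 0$ close enough to zero there exists $y_p\in J$ such that $(x,y_p)\in B_p(a,b)$. Moreover, the remaining eight open rectangles of the form $I\times J$ with $I\in\{(-\infty,-u),(-u,0),(0,u),(u,\infty)\}$ and $J\in\{(-\infty,-1),(-1,0),(0,1),(1,\infty)\}$ ("white cells") contain no point of $B_p(a,b)$ for any $p\neq 0$.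
   Context: For $p\neq 0$ and $(x,y)\in\mathbb{R}^2$ let $L_p((x,y))=(|x|^p+|y|^p)^{1/p}$; for $p<0$ this is extended by setting $L_p((x,y))=0$ whenever $x=0$ or $y=0$. The bisector is $B_p(a,b)=\{q\in\mathbb{R}^2: L_p(a-q)=L_p(b-q)\}$. *)

theory Defs
  imports Complex_Main
begin

text \<open>The L_p "norm" on R^2; for p < 0 it is set to 0 when a coordinate vanishes.\<close>
definition Lp :: "real \<Rightarrow> real \<times> real \<Rightarrow> real" where
  "Lp p v = (if p < 0 \<and> (fst v = 0 \<or> snd v = 0) then 0
             else (\<bar>fst v\<bar> powr p + \<bar>snd v\<bar> powr p) powr (1 / p))"

definition bisector :: "real \<Rightarrow> real \<times> real \<Rightarrow> real \<times> real \<Rightarrow> (real \<times> real) set" where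
  "bisector p a b = {q. Lp p (fst a - fst q, snd a - snd q) = Lp p (fst b - fst q, snd b - snd q)}"

definition xints :: "real \<Rightarrow> real set set" where
  "xints u = {{..< -u}, {-u <..< 0}, {0 <..< u}, {u <..}}"

definition yints :: "real set set" where
  "yints = {{..< -1}, {-1 <..< 0}, {0 <..< 1}, {1 <..}}"

definition cells :: "real \<Rightarrow> (real set \<times> real set) set" where
  "cells u = xints u \<times> yints"

definition grey :: "real \<Rightarrow> (real set \<times> real set) set" where
  "grey u = {({..< -u}, {0 <..< 1}), ({-u <..< 0}, {1 <..}),
             ({0 <..< u}, {..< -1}), ({u <..}, {-1 <..< 0}),
             ({..< -u}, {1 <..}), ({-u <..< 0}, {0 <..< 1}),
             ({0 <..< u}, {-1 <..< 0}), ({u <..}, {..< -1})}"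

definition white :: "real \<Rightarrow> (real set \<times> real set) set" where
  "white u = cells u - grey u"

end

theory Submission
  imports Defs
begin

lemma powr_lim:
  fixes t :: real assumes "t > 0"
  shows "((\<lambda>p. (t powr p - 1) / p) \<longlongrightarrow> ln t) (at 0)"
proof -
  have "((\<lambda>p. exp (p * ln t)) has_real_derivative (exp (0 * ln t) * ln t)) (at 0)"
    by (auto intro!: derivative_eq_intros)
  hence "((\<lambda>p. exp (p * ln t)) has_real_derivative ln t) (at 0)" by simp
  hence "((\<lambda>h. (exp ((0 + h) * ln t) - exp (0 * ln t)) / h) \<longlongrightarrow> ln t) (at 0)"
    unfolding DERIV_def .
  moreover have "(\<lambda>h. (exp ((0 + h) * ln t) - exp (0 * ln t)) / h) = (\<lambda>h. (t powr h - 1) / h)"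
    using assms by (intro ext) (simp add: powr_def mult.commute)
  ultimately show ?thesis by simp
qed

lemma root_between:
  fixes f :: "real \<Rightarrow> real"
  assumes "continuous_on {min a b..max a b} f" "f a < 0" "f b > 0"
  shows "\<exists>y\<in>{min a b..max a b}. f y = 0"
proof (cases "a \<le> b")
  case True
  then show ?thesis using IVT'[of f a 0 b] assms by (auto simp: min_def max_def)
next
  case False
  then show ?thesis using IVT2'[of f a 0 b] assms by (auto simp: min_def max_def)
qed

lemma bis_iff:
  fixes u x y p :: real
  assumes "p \<noteq> 0" "x \<noteq> u" "x \<noteq> -u" "y \<noteq> 1" "y \<noteq> -1"
  shows "(x, y) \<in> bisector p (-u, -1) (u, 1) \<longleftrightarrow>
     \<bar>x+u\<bar> powr p + \<bar>y+1\<bar> powr p = \<bar>x-u\<bar> powr p + \<bar>y-1\<bar> powr p"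
proof -
  define S1 where "S1 = \<bar>x+u\<bar> powr p + \<bar>y+1\<bar> powr p"
  define S2 where "S2 = \<bar>x-u\<bar> powr p + \<bar>y-1\<bar> powr p"
  have e1: "\<bar>-u - x\<bar> = \<bar>x+u\<bar>" "\<bar>-1 - y\<bar> = \<bar>y+1\<bar>" "\<bar>u - x\<bar> = \<bar>x-u\<bar>" "\<bar>1 - y\<bar> = \<bar>y-1\<bar>"
    by auto
  have ne: "-u - x \<noteq> 0" "-1 - y \<noteq> 0" "u - x \<noteq> 0" "1 - y \<noteq> 0" using assms by auto
  have "(x, y) \<in> bisector p (-u, -1) (u, 1) \<longleftrightarrow> S1 powr (1/p) = S2 powr (1/p)"
    unfolding bisector_def Lp_def S1_def S2_def using ne e1 by simp
  also have "\<dots> \<longleftrightarrow> S1 = S2"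
  proof
    assume h: "S1 powr (1/p) = S2 powr (1/p)"
    have p1: "S1 > 0" "S2 > 0" unfolding S1_def S2_def using assms by (auto intro: add_pos_pos)
    have "(S1 powr (1/p)) powr p = (S2 powr (1/p)) powr p" using h by simp
    thus "S1 = S2" using assms p1 by (simp add: powr_powr)
  qed simp
  finally show ?thesis unfolding S1_def S2_def .
qed

lemma core:
  fixes u x y0 y1 :: real and J :: "real set"
  assumes xu: "x \<noteq> u" "x \<noteq> -u" and seg: "{min y0 y1..max y0 y1} \<subseteq> J"
    and J1: "1 \<notin> J" "-1 \<notin> J"
    and s0: "\<bar>x+u\<bar> * \<bar>y0+1\<bar> < \<bar>x-u\<bar> * \<bar>y0-1\<bar>"
    and s1: "\<bar>x+u\<bar> * \<bar>y1+1\<bar> > \<bar>x-u\<bar> * \<bar>y1-1\<bar>"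
  shows "\<exists>\<delta>>0. \<forall>p. p \<noteq> 0 \<and> \<bar>p\<bar> < \<delta> \<longrightarrow> (\<exists>y\<in>J. (x,y) \<in> bisector p (-u,-1) (u,1))"
proof -
  define A where "A = \<bar>x+u\<bar>"
  define C where "C = \<bar>x-u\<bar>"
  define f where "f p y = A powr p + \<bar>y+1\<bar> powr p - C powr p - \<bar>y-1\<bar> powr p" for p y :: real
  have AC: "A > 0" "C > 0" using xu unfolding A_def C_def by auto
  have yJ: "y0 \<in> J" "y1 \<in> J" using seg by auto
  hence yne: "y0 \<noteq> 1" "y0 \<noteq> -1" "y1 \<noteq> 1" "y1 \<noteq> -1" using J1 by auto
  have lim: "((\<lambda>p. f p y / p) \<longlongrightarrow> ln A + ln \<bar>y+1\<bar> - ln C - ln \<bar>y-1\<bar>) (at 0)"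
    if "y \<noteq> 1" "y \<noteq> -1" for y
  proof -
    have "((\<lambda>p. (A powr p - 1)/p + (\<bar>y+1\<bar> powr p - 1)/p - (C powr p - 1)/p - (\<bar>y-1\<bar> powr p - 1)/p)
          \<longlongrightarrow> ln A + ln \<bar>y+1\<bar> - ln C - ln \<bar>y-1\<bar>) (at 0)"
      using that AC by (intro tendsto_intros powr_lim) auto
    moreover have "(\<lambda>p. (A powr p - 1)/p + (\<bar>y+1\<bar> powr p - 1)/p - (C powr p - 1)/p - (\<bar>y-1\<bar> powr p - 1)/p)
       = (\<lambda>p. f p y / p)"
      unfolding f_def by (intro ext) (simp add: diff_divide_distrib add_divide_distrib)
    ultimately show ?thesis by simp
  qed
  have l0: "ln A + ln \<bar>y0+1\<bar> - ln C - ln \<bar>y0-1\<bar> < 0"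
  proof -
    have "ln (A * \<bar>y0+1\<bar>) < ln (C * \<bar>y0-1\<bar>)"
      using s0 AC yne unfolding A_def C_def by (subst ln_less_cancel_iff) auto
    thus ?thesis using AC yne by (simp add: ln_mult)
  qed
  have l1: "ln A + ln \<bar>y1+1\<bar> - ln C - ln \<bar>y1-1\<bar> > 0"
  proof -
    have "ln (A * \<bar>y1+1\<bar>) > ln (C * \<bar>y1-1\<bar>)"
      using s1 AC yne unfolding A_def C_def by (subst ln_less_cancel_iff) auto
    thus ?thesis using AC yne by (simp add: ln_mult)
  qed
  have ev: "eventually (\<lambda>p. f p y0 / p < 0 \<and> f p y1 / p > 0) (at (0::real))"
    using order_tendstoD(2)[OF lim[OF yne(1,2)] l0] order_tendstoD(1)[OF lim[OF yne(3,4)] l1]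
    by (rule eventually_conj)
  then obtain d where d: "d > 0" "\<And>p. p \<noteq> 0 \<Longrightarrow> dist p 0 < d \<Longrightarrow> f p y0 / p < 0 \<and> f p y1 / p > 0"
    unfolding eventually_at by auto
  show ?thesis
  proof (intro exI[of _ d] conjI allI impI)
    show "d > 0" by fact
    fix p :: real assume p: "p \<noteq> 0 \<and> \<bar>p\<bar> < d"
    hence q: "f p y0 / p < 0" "f p y1 / p > 0" using d by auto
    have cont: "continuous_on {min y0 y1..max y0 y1} (\<lambda>y. f p y)"
    proof -
      have "\<forall>y\<in>{min y0 y1..max y0 y1}. y \<noteq> 1 \<and> y \<noteq> -1" using seg J1 by auto
      thus ?thesis unfolding f_def by (intro continuous_intros) auto
    qed
    have "\<exists>y\<in>{min y0 y1..max y0 y1}. f p y = 0"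
    proof (cases "p > 0")
      case True
      hence "f p y0 < 0" "f p y1 > 0" using q by (auto simp: divide_less_0_iff zero_less_divide_iff)
      thus ?thesis using root_between[OF cont] by auto
    next
      case False
      hence "-f p y0 < 0" "-f p y1 > 0" using q p by (auto simp: divide_less_0_iff zero_less_divide_iff)
      moreover have "continuous_on {min y0 y1..max y0 y1} (\<lambda>y. - f p y)"
        using cont by (intro continuous_intros)
      ultimately show ?thesis using root_between[of y0 y1 "\<lambda>y. - f p y"] by auto
    qed
    then obtain y where y: "y \<in> {min y0 y1..max y0 y1}" "f p y = 0" by blast
    have "y \<in> J" using y seg by auto
    moreover have "(x,y) \<in> bisector p (-u,-1) (u,1)"
      using \<open>y \<in> J\<close> J1 p xu y(2) by (subst bis_iff) (auto simp: f_def A_def C_def)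
    ultimately show "\<exists>y\<in>J. (x,y) \<in> bisector p (-u,-1) (u,1)" by blast
  qed
qed

lemma pt01:
  fixes A C :: real assumes "0 < A" "A < C"
  shows "\<exists>y0 y1. y0 \<in> {0<..<1} \<and> y1 \<in> {0<..<1} \<and> A*\<bar>y0+1\<bar> < C*\<bar>y0-1\<bar> \<and> A*\<bar>y1+1\<bar> > C*\<bar>y1-1\<bar>"
proof (intro exI conjI)
  define y0 where "y0 = (C-A)/(2*(C+A))"
  define y1 where "y1 = C/(C+A)"
  show a: "y0 \<in> {0<..<1}" "y1 \<in> {0<..<1}" using assms by (auto simp: y0_def y1_def field_simps)
  have e0: "(A+C)*y0 = (C-A)/2" using assms by (simp add: y0_def field_simps)
  have e1: "(A+C)*y1 = C" using assms by (simp add: y1_def field_simps)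
  have "A*(y0+1) < C*(1-y0)" using assms e0 by (simp add: algebra_simps)
  thus "A*\<bar>y0+1\<bar> < C*\<bar>y0-1\<bar>" using a by simp
  have "A*(y1+1) > C*(1-y1)" using assms e1 by (simp add: algebra_simps)
  thus "A*\<bar>y1+1\<bar> > C*\<bar>y1-1\<bar>" using a by simp
qed

lemma pt1inf:
  fixes A C :: real assumes "0 < A" "A < C"
  shows "\<exists>y0 y1. y0 \<in> {1<..} \<and> y1 \<in> {1<..} \<and> A*\<bar>y0+1\<bar> < C*\<bar>y0-1\<bar> \<and> A*\<bar>y1+1\<bar> > C*\<bar>y1-1\<bar>"
proof (intro exI conjI)
  define y0 where "y0 = 2*(C+A)/(C-A)"
  define y1 where "y1 = C/(C-A)"
  show a: "y0 \<in> {1<..}" "y1 \<in> {1<..}" using assms by (auto simp: y0_def y1_def field_simps)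
  have e0: "(C-A)*y0 = 2*(C+A)" using assms by (simp add: y0_def field_simps)
  have e1: "(C-A)*y1 = C" using assms by (simp add: y1_def field_simps)
  have "A*(y0+1) < C*(y0-1)" using assms e0 by (simp add: algebra_simps)
  thus "A*\<bar>y0+1\<bar> < C*\<bar>y0-1\<bar>" using a by simp
  have "A*(y1+1) > C*(y1-1)" using assms e1 by (simp add: algebra_simps)
  thus "A*\<bar>y1+1\<bar> > C*\<bar>y1-1\<bar>" using a by simp
qed

lemma ptm10:
  fixes A C :: real assumes "0 < C" "C < A"
  shows "\<exists>y0 y1. y0 \<in> {-1<..<0} \<and> y1 \<in> {-1<..<0} \<and> A*\<bar>y0+1\<bar> < C*\<bar>y0-1\<bar> \<and> A*\<bar>y1+1\<bar> > C*\<bar>y1-1\<bar>"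
proof (intro exI conjI)
  define y0 where "y0 = -A/(A+C)"
  define y1 where "y1 = -(A-C)/(2*(A+C))"
  show a: "y0 \<in> {-1<..<0}" "y1 \<in> {-1<..<0}" using assms by (auto simp: y0_def y1_def field_simps)
  have e0: "(A+C)*y0 = -A" using assms by (simp add: y0_def field_simps)
  have e1: "(A+C)*y1 = (C-A)/2" using assms by (simp add: y1_def field_simps)
  have "A*(y0+1) < C*(1-y0)" using assms e0 by (simp add: algebra_simps)
  thus "A*\<bar>y0+1\<bar> < C*\<bar>y0-1\<bar>" using a by simp
  have "A*(y1+1) > C*(1-y1)" using assms e1 by (simp add: algebra_simps)
  thus "A*\<bar>y1+1\<bar> > C*\<bar>y1-1\<bar>" using a by simp
qed

lemma ptminf:
  fixes A C :: real assumes "0 < C" "C < A"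
  shows "\<exists>y0 y1. y0 \<in> {..<-1} \<and> y1 \<in> {..<-1} \<and> A*\<bar>y0+1\<bar> < C*\<bar>y0-1\<bar> \<and> A*\<bar>y1+1\<bar> > C*\<bar>y1-1\<bar>"
proof (intro exI conjI)
  define y0 where "y0 = -A/(A-C)"
  define y1 where "y1 = -2*(A+C)/(A-C)"
  show a: "y0 \<in> {..<-1}" "y1 \<in> {..<-1}" using assms by (auto simp: y0_def y1_def field_simps)
  have e0: "(A-C)*y0 = -A" using assms by (simp add: y0_def field_simps)
  have e1: "(A-C)*y1 = -2*(A+C)" using assms by (simp add: y1_def field_simps)
  have "A*(-y0-1) < C*(1-y0)" using assms e0 by (simp add: algebra_simps)
  thus "A*\<bar>y0+1\<bar> < C*\<bar>y0-1\<bar>" using a by simp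
  have "A*(-y1-1) > C*(1-y1)" using assms e1 by (simp add: algebra_simps)
  thus "A*\<bar>y1+1\<bar> > C*\<bar>y1-1\<bar>" using a by simp
qed

lemma grey_neg:
  fixes u x :: real and J :: "real set"
  assumes "u > 0" "x < 0" "x \<noteq> -u" "J = {0<..<1} \<or> J = {1<..}"
  shows "\<exists>\<delta>>0. \<forall>p. p \<noteq> 0 \<and> \<bar>p\<bar> < \<delta> \<longrightarrow> (\<exists>y\<in>J. (x,y) \<in> bisector p (-u,-1) (u,1))"
proof -
  have AC: "0 < \<bar>x+u\<bar>" "\<bar>x+u\<bar> < \<bar>x-u\<bar>" using assms by auto
  have xu: "x \<noteq> u" "x \<noteq> -u" using assms by auto
  from assms(4) show ?thesis
  proof
    assume J: "J = {0<..<1}"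
    obtain y0 y1 where "y0 \<in> {0<..<1}" "y1 \<in> {0<..<1}" "\<bar>x+u\<bar>*\<bar>y0+1\<bar> < \<bar>x-u\<bar>*\<bar>y0-1\<bar>"
      "\<bar>x+u\<bar>*\<bar>y1+1\<bar> > \<bar>x-u\<bar>*\<bar>y1-1\<bar>" using pt01[OF AC] by blast
    thus ?thesis using J by (intro core[of x u y0 y1 J, OF xu]) auto
  next
    assume J: "J = {1<..}"
    obtain y0 y1 where "y0 \<in> {1<..}" "y1 \<in> {1<..}" "\<bar>x+u\<bar>*\<bar>y0+1\<bar> < \<bar>x-u\<bar>*\<bar>y0-1\<bar>"
      "\<bar>x+u\<bar>*\<bar>y1+1\<bar> > \<bar>x-u\<bar>*\<bar>y1-1\<bar>" using pt1inf[OF AC] by blast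
    thus ?thesis using J by (intro core[of x u y0 y1 J, OF xu]) auto
  qed
qed

lemma grey_pos:
  fixes u x :: real and J :: "real set"
  assumes "u > 0" "x > 0" "x \<noteq> u" "J = {-1<..<0} \<or> J = {..<-1}"
  shows "\<exists>\<delta>>0. \<forall>p. p \<noteq> 0 \<and> \<bar>p\<bar> < \<delta> \<longrightarrow> (\<exists>y\<in>J. (x,y) \<in> bisector p (-u,-1) (u,1))"
proof -
  have AC: "0 < \<bar>x-u\<bar>" "\<bar>x-u\<bar> < \<bar>x+u\<bar>" using assms by auto
  have xu: "x \<noteq> u" "x \<noteq> -u" using assms by auto
  from assms(4) show ?thesis
  proof
    assume J: "J = {-1<..<0}"
    obtain y0 y1 where "y0 \<in> {-1<..<0}" "y1 \<in> {-1<..<0}" "\<bar>x+u\<bar>*\<bar>y0+1\<bar> < \<bar>x-u\<bar>*\<bar>y0-1\<bar>"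
      "\<bar>x+u\<bar>*\<bar>y1+1\<bar> > \<bar>x-u\<bar>*\<bar>y1-1\<bar>" using ptm10[OF AC] by blast
    thus ?thesis using J by (intro core[of x u y0 y1 J, OF xu]) auto
  next
    assume J: "J = {..<-1}"
    obtain y0 y1 where "y0 \<in> {..<-1}" "y1 \<in> {..<-1}" "\<bar>x+u\<bar>*\<bar>y0+1\<bar> < \<bar>x-u\<bar>*\<bar>y0-1\<bar>"
      "\<bar>x+u\<bar>*\<bar>y1+1\<bar> > \<bar>x-u\<bar>*\<bar>y1-1\<bar>" using ptminf[OF AC] by blast
    thus ?thesis using J by (intro core[of x u y0 y1 J, OF xu]) auto
  qed
qed

lemma white_none:
  fixes u x y p :: real
  assumes "u > 0" "p \<noteq> 0" "x \<noteq> u" "x \<noteq> -u" "y \<noteq> 1" "y \<noteq> -1" "(x > 0 \<and> y > 0) \<or> (x < 0 \<and> y < 0)"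
  shows "(x,y) \<notin> bisector p (-u,-1) (u,1)"
proof -
  have lt: "a powr p + b powr p < c powr p + d powr p"
    if "0 < a" "a < c" "0 < b" "b < d" "p > 0" for a b c d :: real
    using powr_less_mono2[of p a c] powr_less_mono2[of p b d] that by auto
  have lt2: "a powr p + b powr p < c powr p + d powr p"
    if "0 < c" "c < a" "0 < d" "d < b" "p < 0" for a b c d :: real
    using powr_less_mono2_neg[of p c a] powr_less_mono2_neg[of p d b] that by auto
  have "\<bar>x+u\<bar> powr p + \<bar>y+1\<bar> powr p \<noteq> \<bar>x-u\<bar> powr p + \<bar>y-1\<bar> powr p"
  proof (cases "x > 0 \<and> y > 0")
    case True
    have o: "0 < \<bar>x-u\<bar>" "\<bar>x-u\<bar> < \<bar>x+u\<bar>" "0 < \<bar>y-1\<bar>" "\<bar>y-1\<bar> < \<bar>y+1\<bar>" using True assms by auto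
    show ?thesis
    proof (cases "p > 0")
      case True thus ?thesis using lt[OF o True] by simp
    next
      case False hence "p < 0" using assms by simp
      thus ?thesis using lt2[OF o] by simp
    qed
  next
    case False
    hence F: "x < 0" "y < 0" using assms by auto
    have o: "0 < \<bar>x+u\<bar>" "\<bar>x+u\<bar> < \<bar>x-u\<bar>" "0 < \<bar>y+1\<bar>" "\<bar>y+1\<bar> < \<bar>y-1\<bar>" using F assms by auto
    show ?thesis
    proof (cases "p > 0")
      case True thus ?thesis using lt[OF o True] by simp
    next
      case False hence "p < 0" using assms by simp
      thus ?thesis using lt2[OF o] by simp
    qed
  qed
  thus ?thesis using bis_iff assms by blast
qed

theorem lemma1:
  fixes u :: real
  assumes "u \<ge> 1"
  defines "a \<equiv> (-u, -1::real)" and "b \<equiv> (u, 1::real)"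
  shows "(\<forall>(I, J) \<in> grey u. \<forall>x \<in> I. \<exists>\<delta>>0. \<forall>p. p \<noteq> 0 \<and> \<bar>p\<bar> < \<delta> \<longrightarrow>
            (\<exists>y \<in> J. (x, y) \<in> bisector p a b))
       \<and> (\<forall>(I, J) \<in> white u. \<forall>p. p \<noteq> 0 \<longrightarrow> (I \<times> J) \<inter> bisector p a b = {})"
proof (intro conjI ballI)
  have u0: "u > 0" using assms by simp
  fix IJ assume IJ: "IJ \<in> grey u"
  obtain I J where IJd: "IJ = (I, J)" by fastforce
  have "\<forall>x\<in>I. \<exists>\<delta>>0. \<forall>p. p \<noteq> 0 \<and> \<bar>p\<bar> < \<delta> \<longrightarrow> (\<exists>y \<in> J. (x, y) \<in> bisector p a b)"
  proof
    fix x assume x: "x \<in> I"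
    have "(x<0 \<and> x\<noteq>-u \<and> (J = {0<..<1} \<or> J = {1<..})) \<or> (x>0 \<and> x\<noteq>u \<and> (J = {-1<..<0} \<or> J = {..<-1}))"
      using IJ x u0 unfolding IJd grey_def by auto
    thus "\<exists>\<delta>>0. \<forall>p. p \<noteq> 0 \<and> \<bar>p\<bar> < \<delta> \<longrightarrow> (\<exists>y \<in> J. (x, y) \<in> bisector p a b)"
      unfolding a_def b_def using grey_neg[OF u0] grey_pos[OF u0] by blast
  qed
  thus "case IJ of (I, J) \<Rightarrow> \<forall>x\<in>I. \<exists>\<delta>>0. \<forall>p. p \<noteq> 0 \<and> \<bar>p\<bar> < \<delta> \<longrightarrow> (\<exists>y \<in> J. (x, y) \<in> bisector p a b)"
    unfolding IJd by simp
next
  have u0: "u > 0" using assms by simp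
  fix IJ assume IJ: "IJ \<in> white u"
  obtain I J where IJd: "IJ = (I, J)" by fastforce
  have cov: "cells u \<subseteq> grey u \<union> {({..< -u}, {..< -1}), ({..< -u}, {-1<..<0}),
      ({-u<..<0}, {..< -1}), ({-u<..<0}, {-1<..<0}), ({0<..<u}, {0<..<1}), ({0<..<u}, {1<..}),
      ({u<..}, {0<..<1}), ({u<..}, {1<..})}"
    unfolding cells_def xints_def yints_def grey_def by (intro subsetI, elim SigmaE, simp only: insert_iff empty_iff, elim disjE; simp only: Un_iff insert_iff prod.inject simp_thms)
  have W: "(I, J) \<in> {({..< -u}, {..< -1}), ({..< -u}, {-1<..<0}),
      ({-u<..<0}, {..< -1}), ({-u<..<0}, {-1<..<0}), ({0<..<u}, {0<..<1}), ({0<..<u}, {1<..}),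
      ({u<..}, {0<..<1}), ({u<..}, {1<..})}"
  proof -
    have c: "(I, J) \<in> cells u" "(I, J) \<notin> grey u" using IJ unfolding IJd white_def by (simp_all only: Diff_iff simp_thms)
    have "(I, J) \<in> grey u \<union> {({..< -u}, {..< -1}), ({..< -u}, {-1<..<0}),
      ({-u<..<0}, {..< -1}), ({-u<..<0}, {-1<..<0}), ({0<..<u}, {0<..<1}), ({0<..<u}, {1<..}),
      ({u<..}, {0<..<1}), ({u<..}, {1<..})}" by (rule subsetD[OF cov c(1)])
    then show ?thesis
    proof (rule UnE)
      assume "(I, J) \<in> grey u" thus ?thesis using c(2) by contradiction
    qed
  qed
  have key: "x \<noteq> u \<and> x \<noteq> -u \<and> y \<noteq> 1 \<and> y \<noteq> -1 \<and> ((x > 0 \<and> y > 0) \<or> (x < 0 \<and> y < 0))"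
    if "x \<in> I" "y \<in> J" for x y
    using W that u0 by (simp only: insert_iff empty_iff prod.inject) (elim disjE conjE; simp)
  show "case IJ of (I, J) \<Rightarrow> \<forall>p. p \<noteq> 0 \<longrightarrow> I \<times> J \<inter> bisector p a b = {}"
    unfolding IJd a_def b_def
  proof (simp only: prod.case, intro allI impI)
    fix p :: real assume p: "p \<noteq> 0"
    show "I \<times> J \<inter> bisector p (-u, -1) (u, 1) = {}"
    proof (rule equals0I)
      fix q assume q: "q \<in> I \<times> J \<inter> bisector p (-u, -1) (u, 1)"
      obtain x y where qd: "q = (x, y)" by fastforce
      have "x \<in> I" "y \<in> J" "(x, y) \<in> bisector p (-u, -1) (u, 1)" using q unfolding qd by auto
      thus False using key[of x y] white_none[OF u0 p, of x y] by blast
    qed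
  qed
qed

end
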